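(* Let $q(x)=\sum_{i=1}^nq_i(x_i)$, where each $q_i:\mathbb{R}\to\mathbb{R}\cup\{+\infty\}$ is proper, convex and lower semicontinuous and $\mathrm{gph}\,\partial q_i$ is the polygonal line in $\mathbb{R}^2$ connecting successively the points $(\xi^i_1,-\infty),(\xi^i_1,\eta^i_1),(\xi^i_2,\eta^i_2),\dots,(\xi^i_{2m_i},\eta^i_{2m_i}),(\xi^i_{2m_i},+\infty)$ for some integer $m_i\ge1$, where $\Delta\xi^i_j:=\xi^i_{j+1}-\xi^i_j>0$ for odd $j$, $\Delta\xi^i_j=0$ for even $j$, $\Delta\eta^i_j:=\eta^i_{j+1}-\eta^i_j\ge0$ for odd $j$ and $\Delta\eta^i_j>0$ for even $j$. Let $(x,x^* )\in\mathrm{gph}\,\partial q$, set $\mathcal{A}_i=\{\xi^i_1\}\cup\{\xi^i_{2m_i}\}\cup\{\xi^i_j:\Delta\xi^i_j=0\}$, and let $G$ be the $n\times n$ diagonal matrix with \[G_{ii}=\begin{cases}1&\text{if }x_i\in\mathcal{A}_i,\\ \dfrac{\Delta\eta^i_j}{\Delta\xi^i_j+\Delta\eta^i_j}&\text{if }x_i\in[\xi^i_j,\xi^i_{j+1}]\setminus\mathcal{A}_i\text{ and }j\in\{1,\dots,2m_i\}\text{ is odd},\end{cases}\qquad i=1,\dots,n.\] Then $G$ is positive semidefinite, $\|G\|\le1$, and $\{((I-G)v^*,Gv^* ):v^*\in\mathbb{R}^n\}\subset\mathrm{gph}\, D^*(\partial q)(x,x^* )$.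
   Context: $\partial$ denotes the convex subdifferential. The polygonal line consists of the vertical ray from $(\xi^i_1,-\infty)$ to $(\xi^i_1,\eta^i_1)$, the segments between consecutive listed points, and the vertical ray from $(\xi^i_{2m_i},\eta^i_{2m_i})$ upward. $D^*$ is the limiting (Mordukhovich) coderivative: $D^*F(\bar x,\bar y)(v^* )=\{u^*:(u^*,-v^* )\in N_{\mathrm{gph}\, F}(\bar x,\bar y)\}$ with $N$ the limiting normal cone (limits of regular normals, the regular normal cone being the polar of the contingent cone), and $\mathrm{gph}\, D^*F(\bar x,\bar y)=\{(v^*,u^* ):u^*\in D^*F(\bar x,\bar y)(v^* )\}$. $\|G\|$ is the spectral norm. *)

theory Defs
  imports "HOL-Analysis.Analysis"
begin

definition proper_fun :: "('a \<Rightarrow> ereal) \<Rightarrow> bool" where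
  "proper_fun f \<longleftrightarrow> (\<forall>x. f x \<noteq> -\<infinity>) \<and> (\<exists>x. f x \<noteq> \<infinity>)"

definition convex_fun :: "('a::real_vector \<Rightarrow> ereal) \<Rightarrow> bool" where
  "convex_fun f \<longleftrightarrow> convex {(x, r::real). f x \<le> ereal r}"

definition lsc_fun :: "('a::topological_space \<Rightarrow> ereal) \<Rightarrow> bool" where
  "lsc_fun f \<longleftrightarrow> (\<forall>x. f x \<le> Liminf (at x) f)"

definition subdiff :: "('a::real_inner \<Rightarrow> ereal) \<Rightarrow> 'a \<Rightarrow> 'a set" where
  "subdiff f x = {s. \<bar>f x\<bar> \<noteq> \<infinity> \<and> (\<forall>y. f x + ereal (s \<bullet> (y - x)) \<le> f y)}"

definition gph_subdiff :: "('a::real_inner \<Rightarrow> ereal) \<Rightarrow> ('a \<times> 'a) set" where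
  "gph_subdiff f = {(x, s). s \<in> subdiff f x}"

definition contingent_cone :: "'a::real_normed_vector set \<Rightarrow> 'a \<Rightarrow> 'a set" where
  "contingent_cone C x = {w. \<exists>t u. (\<forall>k. t k > 0 \<and> x + t k *\<^sub>R u k \<in> C) \<and>
      t \<longlonglongrightarrow> 0 \<and> u \<longlonglongrightarrow> w}"

definition regular_normal_cone :: "'a::real_inner set \<Rightarrow> 'a \<Rightarrow> 'a set" where
  "regular_normal_cone C x =
     (if x \<in> C then {v. \<forall>w\<in>contingent_cone C x. v \<bullet> w \<le> 0} else {})"

definition limiting_normal_cone :: "'a::real_inner set \<Rightarrow> 'a \<Rightarrow> 'a set" where
  "limiting_normal_cone C x = {v. \<exists>xs vs. (\<forall>k. xs k \<in> C \<and> vs k \<in> regular_normal_cone C (xs k)) \<and>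
      xs \<longlonglongrightarrow> x \<and> vs \<longlonglongrightarrow> v}"

definition coderivative :: "('a::real_inner \<times> 'b::real_inner) set \<Rightarrow> 'a \<Rightarrow> 'b \<Rightarrow> 'b \<Rightarrow> 'a set" where
  "coderivative gph x y v = {u. (u, - v) \<in> limiting_normal_cone gph (x, y)}"

definition gph_coderivative :: "('a::real_inner \<times> 'b::real_inner) set \<Rightarrow> 'a \<Rightarrow> 'b \<Rightarrow> ('b \<times> 'a) set" where
  "gph_coderivative gph x y = {(v, u). u \<in> coderivative gph x y v}"

definition polygonal_line :: "(nat \<Rightarrow> real) \<Rightarrow> (nat \<Rightarrow> real) \<Rightarrow> nat \<Rightarrow> (real \<times> real) set" where
  "polygonal_line \<xi> \<eta> m =
     {(\<xi> 1, t) | t. t \<le> \<eta> 1}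
     \<union> (\<Union>j\<in>{1..<2*m}. closed_segment (\<xi> j, \<eta> j) (\<xi> (Suc j), \<eta> (Suc j)))
     \<union> {(\<xi> (2*m), t) | t. \<eta> (2*m) \<le> t}"

definition psd_matrix :: "real^'n^'n \<Rightarrow> bool" where
  "psd_matrix G \<longleftrightarrow> transpose G = G \<and> (\<forall>v. 0 \<le> v \<bullet> (G *v v))"

definition spectral_norm :: "real^'n^'n \<Rightarrow> real" where
  "spectral_norm G = onorm (\<lambda>v. G *v v)"

end

theory Submission
  imports Defs
begin


lemma exI3:
  assumes "(a, b) \<in> P" "\<bar>a - a0\<bar> < \<epsilon>" "\<bar>b - b0\<bar> < \<epsilon>" "(r::real) > 0"
    "\<And>a' b'. (a', b') \<in> P \<Longrightarrow> \<bar>a' - a\<bar> < r \<Longrightarrow> \<bar>b' - b\<bar> < r \<Longrightarrow> \<Phi> a b a' b'"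
  shows "\<exists>a b r. (a, b) \<in> P \<and> \<bar>a - a0\<bar> < \<epsilon> \<and> \<bar>b - (b0::real)\<bar> < \<epsilon> \<and> r > 0 \<and>
     (\<forall>a' b'. (a', b') \<in> P \<longrightarrow> \<bar>a' - a\<bar> < r \<longrightarrow> \<bar>b' - b\<bar> < r \<longrightarrow> \<Phi> a b a' b')"
  using assms by blast

locale pl =
  fixes \<xi> \<eta> :: "nat \<Rightarrow> real" and m :: nat
  assumes m1: "1 \<le> m"
    and xo: "\<And>j. j \<in> {1..<2 * m} \<Longrightarrow> odd j \<Longrightarrow> \<xi> (Suc j) - \<xi> j > 0"
    and xe: "\<And>j. j \<in> {1..<2 * m} \<Longrightarrow> even j \<Longrightarrow> \<xi> (Suc j) - \<xi> j = 0"
    and eo: "\<And>j. j \<in> {1..<2 * m} \<Longrightarrow> odd j \<Longrightarrow> \<eta> (Suc j) - \<eta> j \<ge> 0"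
    and ee: "\<And>j. j \<in> {1..<2 * m} \<Longrightarrow> even j \<Longrightarrow> \<eta> (Suc j) - \<eta> j > 0"
begin

lemma step_xi: "1 \<le> j \<Longrightarrow> j < 2*m \<Longrightarrow> \<xi> j \<le> \<xi> (Suc j)"
  using xo[of j] xe[of j] by (cases "odd j") force+

lemma step_eta: "1 \<le> j \<Longrightarrow> j < 2*m \<Longrightarrow> \<eta> j \<le> \<eta> (Suc j)"
  using eo[of j] ee[of j] by (cases "odd j") force+

lemma mono_xi: assumes "1 \<le> l" "l \<le> l'" "l' \<le> 2*m" shows "\<xi> l \<le> \<xi> l'"
proof -
  have "l' \<le> 2*m \<longrightarrow> \<xi> l \<le> \<xi> l'"
    using assms(2)
  proof (induction l' rule: dec_induct)
    case base then show ?case by simp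
  next
    case (step n) then show ?case using step_xi[of n] assms(1) by force
  qed
  then show ?thesis using assms by simp
qed

lemma mono_eta: assumes "1 \<le> l" "l \<le> l'" "l' \<le> 2*m" shows "\<eta> l \<le> \<eta> l'"
proof -
  have "l' \<le> 2*m \<longrightarrow> \<eta> l \<le> \<eta> l'"
    using assms(2)
  proof (induction l' rule: dec_induct)
    case base then show ?case by simp
  next
    case (step n) then show ?case using step_eta[of n] assms(1) by force
  qed
  then show ?thesis using assms by simp
qed

lemma strict_xi: assumes "1 \<le> l" "l < l'" "l' \<le> 2*m" "odd l" shows "\<xi> l < \<xi> l'"
  using xo[of l] mono_xi[of "Suc l" l'] assms by force

lemma strict_eta: assumes "1 \<le> l" "l < l'" "l' \<le> 2*m" "even l" shows "\<eta> l < \<eta> l'"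
  using ee[of l] mono_eta[of "Suc l" l'] assms by force

lemma P_cases:
  assumes "(a, b) \<in> polygonal_line \<xi> \<eta> m"
  obtains "a = \<xi> 1" "b \<le> \<eta> 1"
    | "a = \<xi> (2*m)" "\<eta> (2*m) \<le> b"
    | l u where "1 \<le> l" "l < 2*m" "0 \<le> u" "u \<le> 1"
        "a = \<xi> l + u * (\<xi> (Suc l) - \<xi> l)" "b = \<eta> l + u * (\<eta> (Suc l) - \<eta> l)"
proof -
  consider "a = \<xi> 1 \<and> b \<le> \<eta> 1" | "a = \<xi> (2*m) \<and> \<eta> (2*m) \<le> b"
    | l where "l \<in> {1..<2*m}" "(a, b) \<in> closed_segment (\<xi> l, \<eta> l) (\<xi> (Suc l), \<eta> (Suc l))"
    using assms unfolding polygonal_line_def by blast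
  then show ?thesis
  proof cases
    case 3
    then obtain u where "0 \<le> u" "u \<le> 1"
      "(a, b) = (1 - u) *\<^sub>R (\<xi> l, \<eta> l) + u *\<^sub>R (\<xi> (Suc l), \<eta> (Suc l))"
      unfolding closed_segment_def by blast
    then show ?thesis using that(3)[of l u] 3 by (auto simp: algebra_simps)
  qed (use that in auto)
qed

lemma seg_mem:
  assumes "1 \<le> l" "l < 2*m" "0 \<le> u" "u \<le> 1"
  shows "(\<xi> l + u * (\<xi> (Suc l) - \<xi> l), \<eta> l + u * (\<eta> (Suc l) - \<eta> l)) \<in> polygonal_line \<xi> \<eta> m"
proof -
  have "(\<xi> l + u * (\<xi> (Suc l) - \<xi> l), \<eta> l + u * (\<eta> (Suc l) - \<eta> l)) \<in>
     closed_segment (\<xi> l, \<eta> l) (\<xi> (Suc l), \<eta> (Suc l))"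
    unfolding closed_segment_def using assms
    by (auto intro!: exI[of _ u] simp: algebra_simps)
  then show ?thesis unfolding polygonal_line_def using assms by auto
qed


lemma seg_bounds:
  assumes "1 \<le> l" "l < 2*m" "0 \<le> u" "u \<le> 1"
  shows "\<xi> l \<le> \<xi> l + u * (\<xi> (Suc l) - \<xi> l)" "\<xi> l + u * (\<xi> (Suc l) - \<xi> l) \<le> \<xi> (Suc l)"
    "\<eta> l \<le> \<eta> l + u * (\<eta> (Suc l) - \<eta> l)" "\<eta> l + u * (\<eta> (Suc l) - \<eta> l) \<le> \<eta> (Suc l)"
proof -
  have d1: "0 \<le> \<xi> (Suc l) - \<xi> l" "0 \<le> \<eta> (Suc l) - \<eta> l" using step_xi step_eta assms by auto
  have "u * (\<xi> (Suc l) - \<xi> l) \<le> \<xi> (Suc l) - \<xi> l" "u * (\<eta> (Suc l) - \<eta> l) \<le> \<eta> (Suc l) - \<eta> l"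
    using mult_left_le_one_le[OF d1(1) assms(3,4)] mult_left_le_one_le[OF d1(2) assms(3,4)] by auto
  then show "\<xi> l \<le> \<xi> l + u * (\<xi> (Suc l) - \<xi> l)" "\<xi> l + u * (\<xi> (Suc l) - \<xi> l) \<le> \<xi> (Suc l)"
    "\<eta> l \<le> \<eta> l + u * (\<eta> (Suc l) - \<eta> l)" "\<eta> l + u * (\<eta> (Suc l) - \<eta> l) \<le> \<eta> (Suc l)"
    using d1 assms by auto
qed

lemma vert1: assumes "(a', b') \<in> polygonal_line \<xi> \<eta> m" "b' < \<eta> 1" shows "a' = \<xi> 1"
  using assms(1)
proof (cases rule: P_cases)
  case 2 then show ?thesis using mono_eta[of 1 "2*m"] m1 assms by auto
next
  case (3 l u) then show ?thesis using mono_eta[of 1 l] seg_bounds[of l u] assms by linarith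
qed auto

lemma vert2: assumes "(a', b') \<in> polygonal_line \<xi> \<eta> m" "b' > \<eta> (2*m)" shows "a' = \<xi> (2*m)"
  using assms(1)
proof (cases rule: P_cases)
  case 1 then show ?thesis using mono_eta[of 1 "2*m"] m1 assms by auto
next
  case (3 l u) then show ?thesis using mono_eta[of "Suc l" "2*m"] seg_bounds[of l u] assms by linarith
qed auto

lemma vert3: assumes "(a', b') \<in> polygonal_line \<xi> \<eta> m" "even j" "1 \<le> j" "j < 2*m"
   "\<eta> j < b'" "b' < \<eta> (Suc j)" shows "a' = \<xi> j"
  using assms(1)
proof (cases rule: P_cases)
  case 1 then show ?thesis using mono_eta[of 1 j] assms by auto
next
  case 2 then show ?thesis using mono_eta[of "Suc j" "2*m"] assms by auto
next
  case (3 l u)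
  note seg = 3
  consider "l < j" | "l = j" | "l > j" by linarith
  then show ?thesis
  proof cases
    case 1 then show ?thesis using mono_eta[of "Suc l" j] seg_bounds[of l u] seg assms by linarith
  next
    case 2 then show ?thesis using xe[of j] seg assms by auto
  next
    case 3 then show ?thesis using mono_eta[of "Suc j" l] seg_bounds[of l u] seg assms by linarith
  qed
qed


lemma main1:
  fixes A :: "real set" and g a0 b0 :: real
  assumes P: "(a0, b0) \<in> polygonal_line \<xi> \<eta> m"
    and Adef: "A = {\<xi> 1, \<xi> (2*m)} \<union> {\<xi> j | j. j \<in> {1..<2*m} \<and> \<xi> (Suc j) - \<xi> j = 0}"
    and gA: "a0 \<in> A \<Longrightarrow> g = 1"
    and gs: "\<And>j. j \<in> {1..2*m} \<Longrightarrow> odd j \<Longrightarrow> a0 \<in> {\<xi> j..\<xi> (Suc j)} - A \<Longrightarrow>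
       g = (\<eta> (Suc j) - \<eta> j) / ((\<xi> (Suc j) - \<xi> j) + (\<eta> (Suc j) - \<eta> j))"
  shows "0 \<le> g \<and> g \<le> 1 \<and> (\<forall>\<epsilon>>0. \<exists>a b r. (a, b) \<in> polygonal_line \<xi> \<eta> m \<and>
     \<bar>a - a0\<bar> < \<epsilon> \<and> \<bar>b - b0\<bar> < \<epsilon> \<and> r > 0 \<and>
     (\<forall>a' b'. (a', b') \<in> polygonal_line \<xi> \<eta> m \<longrightarrow> \<bar>a' - a\<bar> < r \<longrightarrow> \<bar>b' - b\<bar> < r \<longrightarrow>
        g * (a' - a) = (1 - g) * (b' - b)))"
proof (cases "a0 \<in> A")
  case False
  have m2: "1 < 2*m" using m1 by linarith
  from P show ?thesis
  proof (cases rule: P_cases)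
    case 1 then show ?thesis using False Adef by auto
  next
    case 2 then show ?thesis using False Adef by auto
  next
    case (3 l u)
    note seg = 3
    have ol: "odd l"
    proof (rule ccontr)
      assume "\<not> odd l"
      then have "\<xi> (Suc l) - \<xi> l = 0" using xe[of l] seg by auto
      then have "a0 \<in> A" using Adef seg by auto
      then show False using False by auto
    qed
    have xlA: "\<xi> l \<in> A"
    proof (cases "l = 1")
      case True then show ?thesis using Adef by auto
    next
      case False
      then obtain k where k: "l = Suc k" "1 \<le> k" using seg ol
        by (metis One_nat_def dvd_1_left le_add1 Suc_le_eq add.commute not0_implies_Suc
            linorder_neqE_nat not_less_eq plus_1_eq_Suc zero_less_iff_neq_zero less_one)
      have "even k" using k ol by auto
      then have "\<xi> (Suc k) - \<xi> k = 0" using xe[of k] k seg by auto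
      then show ?thesis using Adef k seg by force
    qed
    have xl1A: "\<xi> (Suc l) \<in> A"
    proof (cases "Suc l = 2*m")
      case True then show ?thesis using Adef by auto
    next
      case False
      then have "Suc l < 2*m" using seg ol by (metis Suc_lessI dvd_triv_left even_Suc)
      then have "\<xi> (Suc (Suc l)) - \<xi> (Suc l) = 0" using xe[of "Suc l"] ol by auto
      then show ?thesis using Adef \<open>Suc l < 2*m\<close> by force
    qed
    define D where "D = \<xi> (Suc l) - \<xi> l"
    define E where "E = \<eta> (Suc l) - \<eta> l"
    have D0: "D > 0" using xo[of l] seg ol D_def by auto
    have E0: "E \<ge> 0" using eo[of l] seg ol E_def by auto
    have ne1: "a0 \<noteq> \<xi> l" "a0 \<noteq> \<xi> (Suc l)" using xlA xl1A False by auto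
    have lo: "\<xi> l < a0" "a0 < \<xi> (Suc l)" using seg_bounds[of l u] seg ne1 by auto
    have g: "g = E / (D + E)" unfolding D_def E_def
      by (rule gs) (use seg ol lo False in auto)
    have g01: "0 \<le> g" "g \<le> 1" unfolding g using D0 E0 by (auto simp: divide_le_eq_1)
    have key: "g * (a' - a0) = (1 - g) * (b' - b0)"
      if P': "(a', b') \<in> polygonal_line \<xi> \<eta> m" and r1: "\<xi> l < a'" and r2: "a' < \<xi> (Suc l)" for a' b'
      using P'
    proof (cases rule: P_cases)
      case 1 then show ?thesis using mono_xi[of 1 l] seg r1 by linarith
    next
      case 2 then show ?thesis using mono_xi[of "Suc l" "2*m"] seg r2 by linarith
    next
      case (3 l' u')
      note seg' = 3
      have "l' = l"
      proof (rule ccontr)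
        assume "l' \<noteq> l"
        then consider "l' < l" | "l < l'" by linarith
        then show False
        proof cases
          case 1 then show False using mono_xi[of "Suc l'" l] seg_bounds[of l' u'] seg' seg r1 by linarith
        next
          case 2 then show False using mono_xi[of "Suc l" l'] seg_bounds[of l' u'] seg' seg r2 by linarith
        qed
      qed
      then have h1: "a' = \<xi> l + u' * D" "b' = \<eta> l + u' * E" using seg'(5,6) unfolding D_def E_def by simp_all
      have h2: "a0 = \<xi> l + u * D" "b0 = \<eta> l + u * E" using seg(5,6) unfolding D_def E_def by simp_all
      have "a' - a0 = (u' - u) * D" "b' - b0 = (u' - u) * E"
        using h1 h2 by (simp_all add: algebra_simps)
      note dd = this
      have DE: "D + E \<noteq> 0" using D0 E0 by linarith
      have gDE: "g * (D + E) = E" using DE unfolding g by simp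
      have g2: "(1 - g) * E = g * D" using gDE by (simp add: algebra_simps)
      have e1: "g * (a' - a0) = (u' - u) * (g * D)" using dd(1) by (simp add: ac_simps)
      have e2: "(1 - g) * (b' - b0) = (u' - u) * ((1 - g) * E)" using dd(2) by (simp add: ac_simps)
      show ?thesis using e1 e2 g2 by simp
    qed
    show ?thesis
    proof (intro conjI g01 allI impI)
      fix \<epsilon> :: real assume "\<epsilon> > 0"
      define r where "r = min (a0 - \<xi> l) (\<xi> (Suc l) - a0)"
      have "r > 0" using lo r_def by auto
      show "\<exists>a b r. (a, b) \<in> polygonal_line \<xi> \<eta> m \<and>
     \<bar>a - a0\<bar> < \<epsilon> \<and> \<bar>b - b0\<bar> < \<epsilon> \<and> r > 0 \<and>
     (\<forall>a' b'. (a', b') \<in> polygonal_line \<xi> \<eta> m \<longrightarrow> \<bar>a' - a\<bar> < r \<longrightarrow> \<bar>b' - b\<bar> < r \<longrightarrow>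
        g * (a' - a) = (1 - g) * (b' - b))"
        apply (rule exI3[where \<Phi>="\<lambda>a b a' b'. g * (a' - a) = (1 - g) * (b' - b)" and a=a0 and b=b0 and r=r])
        using P \<open>\<epsilon> > 0\<close> \<open>r > 0\<close> apply simp_all[4]
        by (rule key) (auto simp: r_def abs_less_iff)
    qed
  qed
next
  case True
  then have g1: "g = 1" using gA by auto
  have m2: "1 < 2*m" using m1 by linarith
  have suff: "\<forall>\<epsilon>>0. \<exists>a b r. (a, b) \<in> polygonal_line \<xi> \<eta> m \<and>
     \<bar>a - a0\<bar> < \<epsilon> \<and> \<bar>b - b0\<bar> < \<epsilon> \<and> r > 0 \<and>
     (\<forall>a' b'. (a', b') \<in> polygonal_line \<xi> \<eta> m \<longrightarrow> \<bar>a' - a\<bar> < r \<longrightarrow> \<bar>b' - b\<bar> < r \<longrightarrow>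
        a' = a)"
  proof -
    consider "a0 = \<xi> 1" | "a0 = \<xi> (2*m)" | j where "j \<in> {1..<2*m}" "\<xi> (Suc j) - \<xi> j = 0" "a0 = \<xi> j"
      using True Adef by auto
    then show ?thesis
    proof cases
      case 1
      have b0: "b0 \<le> \<eta> 1" using P
      proof (cases rule: P_cases)
        case 2 then show ?thesis using strict_xi[of 1 "2*m"] m2 1 by auto
      next
        case (3 l u)
        show ?thesis
        proof (cases "l = 1")
          case True
          then have "u * (\<xi> (Suc l) - \<xi> l) = 0" using 3 1 by auto
          moreover have "\<xi> (Suc l) - \<xi> l > 0" using xo[of 1] True m2 by auto
          ultimately have "u = 0" by auto
          then show ?thesis using 3 True by auto
        next
          case False
          then show ?thesis using strict_xi[of 1 l] seg_bounds[of l u] 3 1 by auto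
        qed
      qed auto
      show ?thesis
      proof (intro allI impI)
        fix \<epsilon> :: real assume e: "\<epsilon> > 0"
        have mem: "(\<xi> 1, b0 - \<epsilon>/2) \<in> polygonal_line \<xi> \<eta> m"
          unfolding polygonal_line_def using b0 e by auto
        show "\<exists>a b r. (a, b) \<in> polygonal_line \<xi> \<eta> m \<and>
     \<bar>a - a0\<bar> < \<epsilon> \<and> \<bar>b - b0\<bar> < \<epsilon> \<and> r > 0 \<and>
     (\<forall>a' b'. (a', b') \<in> polygonal_line \<xi> \<eta> m \<longrightarrow> \<bar>a' - a\<bar> < r \<longrightarrow> \<bar>b' - b\<bar> < r \<longrightarrow> a' = a)"
          apply (rule exI3[where \<Phi>="\<lambda>a b a' b'. a' = a" and a="\<xi> 1" and b="b0 - \<epsilon>/2" and r="\<eta> 1 - (b0 - \<epsilon>/2)"])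
          using mem e b0 1 apply (simp_all add: abs_less_iff)[4]
          by (rule vert1) (auto simp: abs_less_iff)
      qed
    next
      case 2
      have b0: "\<eta> (2*m) \<le> b0" using P
      proof (cases rule: P_cases)
        case 1 then show ?thesis using strict_xi[of 1 "2*m"] m2 2 by auto
      next
        case (3 l u)
        show ?thesis
        proof (cases "Suc l = 2*m")
          case True
          then have ol: "odd l" by (metis dvd_triv_left even_Suc)
          have "\<xi> (Suc l) - \<xi> l > 0" using xo[of l] True ol 3 by auto
          moreover have "(1 - u) * (\<xi> (Suc l) - \<xi> l) = 0" using 3 2 True by (auto simp: algebra_simps)
          ultimately have "u = 1" by auto
          then show ?thesis using 3 True by auto
        next
          case False
          then have "Suc l < 2*m" using 3 by auto
          then have "Suc l \<le> 2*m - 1" by auto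
          moreover have "odd (2*m - 1)" using m2 by auto
          ultimately show ?thesis using strict_xi[of "2*m-1" "2*m"] mono_xi[of "Suc l" "2*m - 1"] seg_bounds[of l u] 3 2 m2
            by auto
        qed
      qed auto
      show ?thesis
      proof (intro allI impI)
        fix \<epsilon> :: real assume e: "\<epsilon> > 0"
        have mem: "(\<xi> (2*m), b0 + \<epsilon>/2) \<in> polygonal_line \<xi> \<eta> m"
          unfolding polygonal_line_def using b0 e by auto
        show "\<exists>a b r. (a, b) \<in> polygonal_line \<xi> \<eta> m \<and>
     \<bar>a - a0\<bar> < \<epsilon> \<and> \<bar>b - b0\<bar> < \<epsilon> \<and> r > 0 \<and>
     (\<forall>a' b'. (a', b') \<in> polygonal_line \<xi> \<eta> m \<longrightarrow> \<bar>a' - a\<bar> < r \<longrightarrow> \<bar>b' - b\<bar> < r \<longrightarrow> a' = a)"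
          apply (rule exI3[where \<Phi>="\<lambda>a b a' b'. a' = a" and a="\<xi> (2*m)" and b="b0 + \<epsilon>/2" and r="(b0 + \<epsilon>/2) - \<eta> (2*m)"])
          using mem e b0 2 apply (simp_all add: abs_less_iff)[4]
          by (rule vert2) (auto simp: abs_less_iff)
      qed
    next
      case 3
      note jj = 3
      have ej: "even j" using xo[of j] jj by auto
      have "j \<noteq> 1" using ej by auto
      then have j2: "2 \<le> j" using jj by auto
      have "Suc j \<noteq> 2*m"
      proof
        assume "Suc j = 2*m"
        then have "even (Suc j)" by simp
        then show False using ej by simp
      qed
      then have j3: "Suc j < 2*m" using jj by auto
      have b0: "\<eta> j \<le> b0 \<and> b0 \<le> \<eta> (Suc j)" using P
      proof (cases rule: P_cases)
        case 1 then show ?thesis using strict_xi[of 1 j] j2 jj by auto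
      next
        case 2 then show ?thesis using strict_xi[of "Suc j" "2*m"] j3 ej jj by auto
      next
        case (3 l u)
        note seg = 3
        consider "Suc l < j" | "Suc l = j" | "l = j" | "l = Suc j" | "Suc j < l" by linarith
        then show ?thesis
        proof cases
          case 1
          have "odd (j - 1)" using ej j2 by auto
          then have s1: "\<xi> (j-1) < \<xi> j" by (intro strict_xi) (use j2 jj in auto)
          have s2: "\<xi> (Suc l) \<le> \<xi> (j-1)" by (rule mono_xi) (use 1 jj in auto)
          have "\<xi> j \<le> \<xi> (Suc l)" using seg_bounds[of l u] seg jj by auto
          then show ?thesis using s1 s2 by linarith
        next
          case 2
          then have ol: "odd l" using ej by auto
          have "\<xi> (Suc l) - \<xi> l > 0" using xo[of l] 2 ol seg jj by auto
          moreover have "(1 - u) * (\<xi> (Suc l) - \<xi> l) = 0" using seg jj 2 by (auto simp: algebra_simps)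
          ultimately have "u = 1" by auto
          then show ?thesis using seg 2 step_eta[of j] jj by auto
        next
          case 3
          then show ?thesis using seg_bounds[of l u] seg by auto
        next
          case 4
          then have ol: "odd l" using ej by auto
          have "\<xi> (Suc l) - \<xi> l > 0" using xo[of l] 4 ol seg jj by auto
          moreover have "u * (\<xi> (Suc l) - \<xi> l) = 0" using seg jj 4 by (auto simp: algebra_simps)
          ultimately have "u = 0" by auto
          then show ?thesis using seg 4 step_eta[of j] jj by auto
        next
          case 5
          then show ?thesis using strict_xi[of "Suc j" l] seg_bounds[of l u] seg jj ej by auto
        qed
      qed
      show ?thesis
      proof (intro allI impI)
        fix \<epsilon> :: real assume e: "\<epsilon> > 0"
        define E where "E = \<eta> (Suc j) - \<eta> j"
        have E0: "E > 0" using ee[of j] jj ej E_def by auto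
        define \<delta> where "\<delta> = min (\<epsilon>/2) (E/4)"
        have d0: "\<delta> > 0" using e E0 \<delta>_def by auto
        define b where "b = max (\<eta> j + \<delta>) (min (\<eta> (Suc j) - \<delta>) b0)"
        have bb: "\<eta> j < b" "b < \<eta> (Suc j)" "\<bar>b - b0\<bar> < \<epsilon>"
        proof -
          have d1: "\<delta> \<le> \<epsilon>/2" "\<delta> \<le> E/4" by (simp_all add: \<delta>_def)
          show "\<eta> j < b" "b < \<eta> (Suc j)" "\<bar>b - b0\<bar> < \<epsilon>"
            using d0 d1 b0 E_def e E0 unfolding b_def by (auto simp: max_def min_def abs_less_iff)
        qed
        define u where "u = (b - \<eta> j) / E"
        have u01: "0 \<le> u" "u \<le> 1" unfolding u_def using bb E0 unfolding E_def by (auto simp: divide_le_eq_1)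
        have "(\<xi> j + u * (\<xi> (Suc j) - \<xi> j), \<eta> j + u * (\<eta> (Suc j) - \<eta> j)) \<in> polygonal_line \<xi> \<eta> m"
          using seg_mem[of j u] u01 jj by auto
        moreover have "(\<xi> j + u * (\<xi> (Suc j) - \<xi> j), \<eta> j + u * (\<eta> (Suc j) - \<eta> j)) = (\<xi> j, b)"
          using jj E0 u_def E_def by auto
        ultimately have mem: "(\<xi> j, b) \<in> polygonal_line \<xi> \<eta> m" by simp
        show "\<exists>a b r. (a, b) \<in> polygonal_line \<xi> \<eta> m \<and>
     \<bar>a - a0\<bar> < \<epsilon> \<and> \<bar>b - b0\<bar> < \<epsilon> \<and> r > 0 \<and>
     (\<forall>a' b'. (a', b') \<in> polygonal_line \<xi> \<eta> m \<longrightarrow> \<bar>a' - a\<bar> < r \<longrightarrow> \<bar>b' - b\<bar> < r \<longrightarrow> a' = a)"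
          apply (rule exI3[where \<Phi>="\<lambda>a b a' b'. a' = a" and a="\<xi> j" and b=b and r="min (b - \<eta> j) (\<eta> (Suc j) - b)"])
          using mem e bb jj apply (simp_all add: abs_less_iff)[4]
          by (rule vert3[of _ _ j]) (use jj ej in \<open>auto simp: abs_less_iff\<close>)
      qed
    qed
  qed
  show ?thesis using suff g1 by auto
qed

end


lemma sub_comp:
  fixes q :: "'n::finite \<Rightarrow> real \<Rightarrow> ereal" and y s :: "real^'n"
  assumes s: "s \<in> subdiff (\<lambda>y. \<Sum>i\<in>UNIV. q i (y $ i)) y"
    and proper: "\<And>i. proper_fun (q i)"
  shows "s $ i \<in> subdiff (q i) (y $ i)"
proof -
  have fin: "\<bar>(\<Sum>i\<in>UNIV. q i (y $ i))\<bar> \<noteq> \<infinity>"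
    and ineq: "\<And>y'. (\<Sum>i\<in>UNIV. q i (y $ i)) + ereal (s \<bullet> (y' - y)) \<le> (\<Sum>i\<in>UNIV. q i (y' $ i))"
    using s unfolding subdiff_def by auto
  have fk: "\<bar>q k (y $ k)\<bar> \<noteq> \<infinity>" for k using fin sum_Inf[of "\<lambda>i. q i (y $ i)" UNIV] by auto
  define c where "c k = real_of_ereal (q k (y $ k))" for k
  have qc: "q k (y $ k) = ereal (c k)" for k using fk[of k] c_def by (cases "q k (y $ k)") auto
  define R where "R = (\<Sum>k\<in>UNIV - {i}. c k)"
  have "q i (y $ i) + ereal (s $ i * (t - y $ i)) \<le> q i t" for t
  proof -
    define y' where "y' = (\<chi> k. if k = i then t else y $ k)"
    have inn: "s \<bullet> (y' - y) = s $ i * (t - y $ i)"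
    proof -
      have "\<And>ia. s $ ia * ((y' - y) $ ia) = (if ia = i then s $ i * (t - y $ i) else 0)"
        unfolding y'_def by auto
      then show ?thesis unfolding inner_vec_def inner_real_def by simp
    qed
    have s1: "(\<Sum>k\<in>UNIV. q k (y $ k)) = ereal (c i) + ereal R"
      unfolding R_def qc
      by (simp add: sum.remove[of UNIV i])
    have s2: "(\<Sum>k\<in>UNIV. q k (y' $ k)) = q i t + ereal R"
    proof -
      have "(\<Sum>k\<in>UNIV. q k (y' $ k)) = q i (y' $ i) + (\<Sum>k\<in>UNIV - {i}. q k (y' $ k))"
        by (simp add: sum.remove[of UNIV i])
      also have "(\<Sum>k\<in>UNIV - {i}. q k (y' $ k)) = (\<Sum>k\<in>UNIV - {i}. ereal (c k))"
        by (rule sum.cong) (auto simp: y'_def qc)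
      finally show ?thesis by (simp add: y'_def R_def)
    qed
    have "ereal (c i) + ereal R + ereal (s $ i * (t - y $ i)) \<le> q i t + ereal R"
      using ineq[of y'] s1 s2 inn by simp
    moreover have "q i t \<noteq> -\<infinity>" using proper[of i] unfolding proper_fun_def by auto
    ultimately show ?thesis using qc[of i] by (cases "q i t") auto
  qed
  then show ?thesis unfolding subdiff_def using fk[of i] by (auto simp: inner_real_def)
qed

lemma sub_prod:
  fixes q :: "'n::finite \<Rightarrow> real \<Rightarrow> ereal" and y s :: "real^'n"
  assumes s: "\<And>i. s $ i \<in> subdiff (q i) (y $ i)"
  shows "s \<in> subdiff (\<lambda>y. \<Sum>i\<in>UNIV. q i (y $ i)) y"
proof -
  have fk: "\<bar>q k (y $ k)\<bar> \<noteq> \<infinity>" and ik: "\<And>t. q k (y $ k) + ereal (s $ k * (t - y $ k)) \<le> q k t" for k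
    using s[of k] unfolding subdiff_def by (auto simp: inner_real_def)
  define c where "c k = real_of_ereal (q k (y $ k))" for k
  have qc: "q k (y $ k) = ereal (c k)" for k using fk[of k] c_def by (cases "q k (y $ k)") auto
  have "(\<Sum>i\<in>UNIV. q i (y $ i)) + ereal (s \<bullet> (y' - y)) \<le> (\<Sum>i\<in>UNIV. q i (y' $ i))" for y'
  proof -
    have "(\<Sum>i\<in>UNIV. q i (y $ i)) + ereal (s \<bullet> (y' - y)) = (\<Sum>i\<in>UNIV. ereal (c i + s $ i * (y' $ i - y $ i)))"
      unfolding qc inner_vec_def by (simp add: sum.distrib)
    also have "\<dots> \<le> (\<Sum>i\<in>UNIV. q i (y' $ i))"
      by (rule sum_mono) (use ik qc in auto)
    finally show ?thesis .
  qed
  then show ?thesis unfolding subdiff_def by (auto simp: qc)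
qed

lemma reg_normal_flat:
  fixes C :: "'a::real_inner set"
  assumes "p \<in> C" "r > 0" "\<And>z. z \<in> C \<Longrightarrow> dist z p < r \<Longrightarrow> nv \<bullet> (z - p) = 0"
  shows "nv \<in> regular_normal_cone C p"
proof -
  have "nv \<bullet> w \<le> 0" if w: "w \<in> contingent_cone C p" for w
  proof -
    obtain t u where tu: "\<And>k. t k > 0 \<and> p + t k *\<^sub>R u k \<in> C" "t \<longlonglongrightarrow> 0" "u \<longlonglongrightarrow> w"
      using w unfolding contingent_cone_def by blast
    have "(\<lambda>k. t k *\<^sub>R u k) \<longlonglongrightarrow> 0 *\<^sub>R w" using tu by (intro tendsto_scaleR)
    then have "eventually (\<lambda>k. dist (t k *\<^sub>R u k) 0 < r) sequentially"
      using assms(2) by (simp add: tendsto_iff)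
    then have ev: "eventually (\<lambda>k. nv \<bullet> u k = 0) sequentially"
    proof (rule eventually_mono)
      fix k assume "dist (t k *\<^sub>R u k) 0 < r"
      then have "dist (p + t k *\<^sub>R u k) p < r" by (simp add: dist_norm)
      then have "nv \<bullet> (t k *\<^sub>R u k) = 0" using assms(3)[of "p + t k *\<^sub>R u k"] tu(1)[of k] by simp
      then show "nv \<bullet> u k = 0" using tu(1)[of k] by simp
    qed
    have "(\<lambda>k. nv \<bullet> u k) \<longlonglongrightarrow> nv \<bullet> w" using tu(3) by (intro tendsto_intros)
    then have "(\<lambda>k. 0) \<longlonglongrightarrow> nv \<bullet> w" using ev by (rule Lim_transform_eventually)
    then have "nv \<bullet> w = 0" using LIMSEQ_unique tendsto_const by blast
    then show ?thesis by simp
  qed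
  then show ?thesis unfolding regular_normal_cone_def using assms(1) by auto
qed



theorem proposition6p1:
  fixes q :: "'n::finite \<Rightarrow> real \<Rightarrow> ereal"
    and \<xi> \<eta> :: "'n \<Rightarrow> nat \<Rightarrow> real"
    and m :: "'n \<Rightarrow> nat"
    and x xs :: "real^'n"
    and A :: "'n \<Rightarrow> real set"
    and G :: "real^'n^'n"
  assumes proper: "\<And>i. proper_fun (q i)"
    and convex: "\<And>i. convex_fun (q i)"
    and lsc: "\<And>i. lsc_fun (q i)"
    and m_pos: "\<And>i. 1 \<le> m i"
    and gph_qi: "\<And>i. gph_subdiff (q i) = polygonal_line (\<xi> i) (\<eta> i) (m i)"
    and dxi_odd: "\<And>i j. j \<in> {1..<2 * m i} \<Longrightarrow> odd j \<Longrightarrow> \<xi> i (Suc j) - \<xi> i j > 0"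
    and dxi_even: "\<And>i j. j \<in> {1..<2 * m i} \<Longrightarrow> even j \<Longrightarrow> \<xi> i (Suc j) - \<xi> i j = 0"
    and deta_odd: "\<And>i j. j \<in> {1..<2 * m i} \<Longrightarrow> odd j \<Longrightarrow> \<eta> i (Suc j) - \<eta> i j \<ge> 0"
    and deta_even: "\<And>i j. j \<in> {1..<2 * m i} \<Longrightarrow> even j \<Longrightarrow> \<eta> i (Suc j) - \<eta> i j > 0"
    and in_gph: "(x, xs) \<in> gph_subdiff (\<lambda>y. \<Sum>i\<in>UNIV. q i (y $ i))"
    and A_def: "\<And>i. A i = {\<xi> i 1, \<xi> i (2 * m i)} \<union>
                   {\<xi> i j | j. j \<in> {1..<2 * m i} \<and> \<xi> i (Suc j) - \<xi> i j = 0}"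
    and G_offdiag: "\<And>i k. i \<noteq> k \<Longrightarrow> G $ i $ k = 0"
    and G_A: "\<And>i. x $ i \<in> A i \<Longrightarrow> G $ i $ i = 1"
    and G_seg: "\<And>i j. j \<in> {1..2 * m i} \<Longrightarrow> odd j \<Longrightarrow>
                 x $ i \<in> {\<xi> i j .. \<xi> i (Suc j)} - A i \<Longrightarrow>
                 G $ i $ i = (\<eta> i (Suc j) - \<eta> i j) /
                             ((\<xi> i (Suc j) - \<xi> i j) + (\<eta> i (Suc j) - \<eta> i j))"
  shows "psd_matrix G \<and> spectral_norm G \<le> 1 \<and>
         {((mat 1 - G) *v v, G *v v) | v. True} \<subseteq>
           gph_coderivative (gph_subdiff (\<lambda>y. \<Sum>i\<in>UNIV. q i (y $ i))) x xs"
proof -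
  define Q where "Q = (\<lambda>y::real^'n. \<Sum>i\<in>UNIV. q i (y $ i))"
  define C where "C = gph_subdiff Q"
  define PL where "PL i = polygonal_line (\<xi> i) (\<eta> i) (m i)" for i
  have plI: "pl (\<xi> i) (\<eta> i) (m i)" for i
    by unfold_locales (use m_pos dxi_odd dxi_even deta_odd deta_even in auto)
  have PLsub: "(a, b) \<in> PL i \<longleftrightarrow> b \<in> subdiff (q i) a" for i a b
    unfolding PL_def gph_qi[symmetric] gph_subdiff_def by auto
  have xsQ: "xs \<in> subdiff Q x" using in_gph unfolding Q_def gph_subdiff_def by auto
  have comp: "(x $ i, xs $ i) \<in> PL i" for i
    using sub_comp[OF xsQ[unfolded Q_def] proper] PLsub by auto
  have M: "0 \<le> G $ i $ i \<and> G $ i $ i \<le> 1 \<and> (\<forall>\<epsilon>>0. \<exists>a b r. (a, b) \<in> PL i \<and>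
     \<bar>a - x $ i\<bar> < \<epsilon> \<and> \<bar>b - xs $ i\<bar> < \<epsilon> \<and> r > 0 \<and>
     (\<forall>a' b'. (a', b') \<in> PL i \<longrightarrow> \<bar>a' - a\<bar> < r \<longrightarrow> \<bar>b' - b\<bar> < r \<longrightarrow>
        G $ i $ i * (a' - a) = (1 - G $ i $ i) * (b' - b)))" for i
    unfolding PL_def
    by (rule pl.main1[OF plI comp[unfolded PL_def] A_def G_A G_seg])
  have g01: "0 \<le> G $ i $ i" "G $ i $ i \<le> 1" for i using M[of i] by auto
  have Gv: "G *v v = (\<chi> i. G $ i $ i * v $ i)" for v
  proof -
    have "(\<Sum>j\<in>UNIV. G $ i $ j * v $ j) = G $ i $ i * v $ i" for i
    proof -
      have "(\<Sum>j\<in>UNIV. G $ i $ j * v $ j) = (\<Sum>j\<in>UNIV. if j = i then G $ i $ i * v $ i else 0)"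
        by (rule sum.cong) (use G_offdiag[of i] in auto)
      then show ?thesis by simp
    qed
    then show ?thesis by (simp add: vec_eq_iff matrix_vector_mult_def)
  qed
  have IGv: "(mat 1 - G) *v v = (\<chi> i. (1 - G $ i $ i) * v $ i)" for v
  proof -
    have "(\<Sum>j\<in>UNIV. (mat 1 - G) $ i $ j * v $ j) = (1 - G $ i $ i) * v $ i" for i
    proof -
      have "(\<Sum>j\<in>UNIV. (mat 1 - G) $ i $ j * v $ j) = (\<Sum>j\<in>UNIV. if j = i then (1 - G $ i $ i) * v $ i else 0)"
        by (rule sum.cong) (use G_offdiag[of i] in \<open>auto simp: mat_def\<close>)
      then show ?thesis by simp
    qed
    then show ?thesis by (simp add: vec_eq_iff matrix_vector_mult_def)
  qed
  have psd: "psd_matrix G"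
  proof -
    have sym: "G $ j $ i = G $ i $ j" for i j
      using G_offdiag[of i j] G_offdiag[of j i] by (cases "i = j") auto
    have "transpose G = G"
      using sym by (simp add: vec_eq_iff transpose_def)
    moreover have "0 \<le> v \<bullet> (G *v v)" for v
      unfolding Gv inner_vec_def
    proof (rule sum_nonneg)
      fix i
      have "v $ i * (G $ i $ i * v $ i) = G $ i $ i * (v $ i)\<^sup>2" by (simp add: power2_eq_square ac_simps)
      moreover have "0 \<le> G $ i $ i * (v $ i)\<^sup>2" using g01[of i] by simp
      ultimately show "0 \<le> v $ i \<bullet> (\<chi> i. G $ i $ i * v $ i) $ i" by (simp only: inner_real_def vec_lambda_beta)
    qed
    ultimately show ?thesis unfolding psd_matrix_def by auto
  qed
  have sn: "spectral_norm G \<le> 1"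
    unfolding spectral_norm_def
  proof (rule onorm_le)
    fix v :: "real^'n"
    have "(G *v v) \<bullet> (G *v v) \<le> v \<bullet> v"
      unfolding Gv inner_vec_def
    proof (rule sum_mono)
      fix i
      have gg: "G $ i $ i * G $ i $ i \<le> 1" using g01[of i] by (simp add: mult_le_one)
      have "(G $ i $ i * v $ i) * (G $ i $ i * v $ i) = (G $ i $ i * G $ i $ i) * (v $ i * v $ i)"
        by (simp add: ac_simps)
      also have "\<dots> \<le> v $ i * v $ i"
        using gg g01[of i] by (intro mult_left_le_one_le) auto
      finally show "(\<chi> i. G $ i $ i * v $ i) $ i \<bullet> (\<chi> i. G $ i $ i * v $ i) $ i \<le> v $ i \<bullet> v $ i"
        by simp
    qed
    then show "norm (G *v v) \<le> 1 * norm v" by (simp add: norm_le)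
  qed
  have "\<forall>k i. \<exists>a b r. (a, b) \<in> PL i \<and>
     \<bar>a - x $ i\<bar> < inverse (real (Suc k)) \<and> \<bar>b - xs $ i\<bar> < inverse (real (Suc k)) \<and> r > 0 \<and>
     (\<forall>a' b'. (a', b') \<in> PL i \<longrightarrow> \<bar>a' - a\<bar> < r \<longrightarrow> \<bar>b' - b\<bar> < r \<longrightarrow>
        G $ i $ i * (a' - a) = (1 - G $ i $ i) * (b' - b))"
    using M by auto
  then obtain fa fb fr where F: "\<And>k i. (fa k i, fb k i) \<in> PL i \<and>
     \<bar>fa k i - x $ i\<bar> < inverse (real (Suc k)) \<and> \<bar>fb k i - xs $ i\<bar> < inverse (real (Suc k)) \<and> fr k i > 0 \<and>
     (\<forall>a' b'. (a', b') \<in> PL i \<longrightarrow> \<bar>a' - fa k i\<bar> < fr k i \<longrightarrow> \<bar>b' - fb k i\<bar> < fr k i \<longrightarrow>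
        G $ i $ i * (a' - fa k i) = (1 - G $ i $ i) * (b' - fb k i))"
    by metis
  define pa where "pa k = (\<chi> i. fa k i)" for k
  define pb where "pb k = (\<chi> i. fb k i)" for k
  define rr where "rr k = Min (range (fr k))" for k
  define nv where "nv v = ((\<chi> i. G $ i $ i * v $ i), - (\<chi> i. (1 - G $ i $ i) * v $ i))" for v
  have rr0: "rr k > 0" for k unfolding rr_def using F by (simp add: Min_gr_iff)
  have rrle: "rr k \<le> fr k i" for k i unfolding rr_def by simp
  have pC: "(pa k, pb k) \<in> C" for k
    unfolding C_def gph_subdiff_def Q_def
    using sub_prod[where s="pb k" and y="pa k" and q=q] F PLsub by (auto simp: pa_def pb_def)
  have reg: "nv v \<in> regular_normal_cone C (pa k, pb k)" for k v
  proof (rule reg_normal_flat[OF pC rr0])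
    fix z assume z: "z \<in> C" "dist z (pa k, pb k) < rr k"
    obtain y ys where zz: "z = (y, ys)" by (cases z)
    have ysQ: "ys \<in> subdiff (\<lambda>y. \<Sum>i\<in>UNIV. q i (y $ i)) y" using z zz unfolding C_def gph_subdiff_def Q_def by auto
    have each: "G $ i $ i * (y $ i - fa k i) = (1 - G $ i $ i) * (ys $ i - fb k i)" for i
    proof -
      have "(y $ i, ys $ i) \<in> PL i" using sub_comp[OF ysQ proper] PLsub by auto
      moreover have "\<bar>y $ i - fa k i\<bar> < fr k i"
      proof -
        have "\<bar>y $ i - fa k i\<bar> = \<bar>(y - pa k) $ i\<bar>" by (simp add: pa_def)
        also have "\<dots> \<le> norm (y - pa k)" by (rule component_le_norm_cart)
        also have "\<dots> \<le> norm (y - pa k, ys - pb k)" by (rule norm_fst_le)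
        also have "\<dots> = dist z (pa k, pb k)" by (simp add: zz dist_norm)
        finally show ?thesis using z rrle[of k i] by linarith
      qed
      moreover have "\<bar>ys $ i - fb k i\<bar> < fr k i"
      proof -
        have "\<bar>ys $ i - fb k i\<bar> = \<bar>(ys - pb k) $ i\<bar>" by (simp add: pb_def)
        also have "\<dots> \<le> norm (ys - pb k)" by (rule component_le_norm_cart)
        also have "\<dots> \<le> norm (y - pa k, ys - pb k)" by (rule norm_snd_le)
        also have "\<dots> = dist z (pa k, pb k)" by (simp add: zz dist_norm)
        finally show ?thesis using z rrle[of k i] by linarith
      qed
      ultimately show ?thesis using F[of k i] by blast
    qed
    have "nv v \<bullet> (z - (pa k, pb k)) =
        (\<Sum>i\<in>UNIV. (G $ i $ i * v $ i) * (y $ i - fa k i) - ((1 - G $ i $ i) * v $ i) * (ys $ i - fb k i))"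
      by (simp add: zz nv_def pa_def pb_def inner_vec_def sum_subtractf sum_negf)
    also have "\<dots> = (\<Sum>i\<in>UNIV. v $ i * (G $ i $ i * (y $ i - fa k i) - (1 - G $ i $ i) * (ys $ i - fb k i)))"
      by (rule sum.cong) (simp_all add: algebra_simps)
    also have "\<dots> = 0" using each by simp
    finally show "nv v \<bullet> (z - (pa k, pb k)) = 0" .
  qed
  have conv: "(\<lambda>k. (pa k, pb k)) \<longlonglongrightarrow> (x, xs)"
  proof (rule tendsto_Pair)
    show "pa \<longlonglongrightarrow> x"
    proof (rule vec_tendstoI)
      fix i
      have "(\<lambda>k. pa k $ i - x $ i) \<longlonglongrightarrow> 0"
        by (rule Lim_null_comparison[OF _ LIMSEQ_inverse_real_of_nat])
           (use F in \<open>auto simp: pa_def less_imp_le\<close>)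
      then show "(\<lambda>k. pa k $ i) \<longlonglongrightarrow> x $ i" by (rule LIM_zero_cancel)
    qed
    show "pb \<longlonglongrightarrow> xs"
    proof (rule vec_tendstoI)
      fix i
      have "(\<lambda>k. pb k $ i - xs $ i) \<longlonglongrightarrow> 0"
        by (rule Lim_null_comparison[OF _ LIMSEQ_inverse_real_of_nat])
           (use F in \<open>auto simp: pb_def less_imp_le\<close>)
      then show "(\<lambda>k. pb k $ i) \<longlonglongrightarrow> xs $ i" by (rule LIM_zero_cancel)
    qed
  qed
  have lim: "nv v \<in> limiting_normal_cone C (x, xs)" for v
    unfolding limiting_normal_cone_def
    apply (rule CollectI, rule exI[of _ "\<lambda>k. (pa k, pb k)"], rule exI[of _ "\<lambda>k. nv v"])
    using pC reg conv by auto
  have "((mat 1 - G) *v v, G *v v) \<in> gph_coderivative C x xs" for v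
    using lim[of v] unfolding gph_coderivative_def coderivative_def IGv Gv nv_def by simp
  then show ?thesis using psd sn unfolding C_def Q_def by auto
qed

end
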